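(* In the setting of the context, let $x_0=x_0(0)$, $x_1=x_1(0)$ and $r_0=1/x_1$. Then, for $|x|\le 1$, $$\varphi_0(x)=\frac{\pi_{0,0}}{1-r_0x},$$ and for $j=1,2,\ldots$ and $|x|\le1$, $x\neq x_0$, $$\varphi_j(x)=\frac{a_j}{x-x_1}-\frac{q\varphi_{j-1}(x_0)(x+x_0)}{\bar q(x-x_1)}-\frac{q(px+\bar p)(\bar\mu_hx+\mu_h)}{p\bar q\bar\mu_h(x-x_1)}\cdot\frac{\varphi_{j-1}(x)-\varphi_{j-1}(x_0)}{x-x_0},$$ where $$a_j=\frac{[\bar p\bar q(\mu_l-\mu_h)-\bar pq\mu_l]\pi_{0,j}-\bar p\bar q\mu_l\pi_{0,j+1}+\bar pq(\mu_l-\mu_h)\pi_{0,j-1}-q(\bar p\bar\mu_h+p\mu_h)\varphi_{j-1}(x_0)}{p\bar q\bar\mu_h}.$$ Moreover $\pi_{0,0}=\frac{1-\rho}{\bar p\bar q}$.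
   Context: Fix $p,q,\mu_h,\mu_l\in(0,1)$ with $p+q+\mu_h+\mu_l=1$. For real $x$ write $\bar x=1-x$; let $\rho_h=p/\mu_h$, $\rho_l=q/\mu_l$, $\rho=\rho_h+\rho_l$, and assume $\rho<1$. Let $(Q_1(n),Q_2(n))_{n\ge0}$ be the discrete-time Markov chain on $\mathbb{Z}_{\ge0}^2$ (numbers of high- and low-priority customers in a discrete-time preemptive priority queue, early arrival system) whose one-step transition probabilities from $(i,j)$ to $(i+k,j+l)$ are as follows (unlisted transitions have probability $0$). If $i\ge1$, $j\ge0$: $(k,l)=(1,0)$: $p\bar q\bar\mu_h$; $(1,1)$: $pq\bar\mu_h$; $(0,1)$: $pq\mu_h+\bar pq\bar\mu_h$; $(-1,1)$: $\bar pq\mu_h$; $(-1,0)$: $\bar p\bar q\mu_h$; $(0,0)$: $\bar p\bar q\bar\mu_h+p\bar q\mu_h$. If $i=0$, $j\ge1$: $(1,0)$: $p\bar q\bar\mu_h$; $(1,1)$: $pq\bar\mu_h$; $(0,1)$: $pq\mu_h+\bar pq\bar\mu_l$; $(0,-1)$: $\bar p\bar q\mu_l$; $(0,0)$: $\bar p\bar q\bar\mu_l+p\bar q\mu_h+\bar pq\mu_l$. If $(i,j)=(0,0)$: $(1,0)$: $p\bar q\bar\mu_h$; $(1,1)$: $pq\bar\mu_h$; $(0,1)$: $pq\mu_h+\bar pq\bar\mu_l$; $(0,0)$: $\bar p\bar q+p\bar q\mu_h+\bar pq\mu_l$. Let $(\pi_{i,j})_{i,j\ge0}$ be its stationary distribution,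 and let $\varphi_j(x)=\sum_{i\ge0}\pi_{i,j}x^i$ for $j\ge0$. Define $\Delta(y)=(p\mu_h-\bar p\bar\mu_h)^2(qy+\bar q)^2-2(p\mu_h+\bar p\bar\mu_h)(qy+\bar q)+1$, and $x_0(y)=\frac{1-(p\mu_h+\bar p\bar\mu_h)(qy+\bar q)-\sqrt{\Delta(y)}}{2p\bar\mu_h(qy+\bar q)}$, $x_1(y)=\frac{1-(p\mu_h+\bar p\bar\mu_h)(qy+\bar q)+\sqrt{\Delta(y)}}{2p\bar\mu_h(qy+\bar q)}$, where the square root is the positive one for real $y$ with $\Delta(y)>0$ (in particular at $y=0$). *)

theory Defs
  imports "HOL-Analysis.Analysis"
begin

text \<open>One-step transition probability of the discrete-time preemptive priority queue
  (early arrival system) from state (i,j) to state (i',j').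
  Parameters: p, q arrival probabilities, mh, ml service probabilities.\<close>

definition prio_trans :: "real \<Rightarrow> real \<Rightarrow> real \<Rightarrow> real \<Rightarrow> nat \<times> nat \<Rightarrow> nat \<times> nat \<Rightarrow> real" where
  "prio_trans p q mh ml s t =
    (let i = fst s; j = snd s;
         k = int (fst t) - int i; l = int (snd t) - int j;
         pb = 1 - p; qb = 1 - q; mhb = 1 - mh; mlb = 1 - ml in
     if i \<ge> 1 then
       (if (k, l) = (1, 0) then p * qb * mhb
        else if (k, l) = (1, 1) then p * q * mhb
        else if (k, l) = (0, 1) then p * q * mh + pb * q * mhb
        else if (k, l) = (-1, 1) then pb * q * mh
        else if (k, l) = (-1, 0) then pb * qb * mh
        else if (k, l) = (0, 0) then pb * qb * mhb + p * qb * mh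
        else 0)
     else if j \<ge> 1 then
       (if (k, l) = (1, 0) then p * qb * mhb
        else if (k, l) = (1, 1) then p * q * mhb
        else if (k, l) = (0, 1) then p * q * mh + pb * q * mlb
        else if (k, l) = (0, -1) then pb * qb * ml
        else if (k, l) = (0, 0) then pb * qb * mlb + p * qb * mh + pb * q * ml
        else 0)
     else
       (if (k, l) = (1, 0) then p * qb * mhb
        else if (k, l) = (1, 1) then p * q * mhb
        else if (k, l) = (0, 1) then p * q * mh + pb * q * mlb
        else if (k, l) = (0, 0) then pb * qb + p * qb * mh + pb * q * ml
        else 0))"

definition is_stationary :: "(nat \<times> nat \<Rightarrow> nat \<times> nat \<Rightarrow> real) \<Rightarrow> (nat \<times> nat \<Rightarrow> real) \<Rightarrow> bool" where
  "is_stationary P \<pi> \<longleftrightarrow>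
     (\<forall>s. \<pi> s \<ge> 0) \<and> (\<pi> has_sum 1) UNIV \<and>
     (\<forall>t. ((\<lambda>s. \<pi> s * P s t) has_sum \<pi> t) UNIV)"

definition gen_phi :: "(nat \<times> nat \<Rightarrow> real) \<Rightarrow> nat \<Rightarrow> complex \<Rightarrow> complex" where
  "gen_phi \<pi> j x = (\<Sum>i. complex_of_real (\<pi> (i, j)) * x ^ i)"

definition prio_Delta :: "real \<Rightarrow> real \<Rightarrow> real \<Rightarrow> real \<Rightarrow> real" where
  "prio_Delta p q mh y =
     (p * mh - (1 - p) * (1 - mh))^2 * (q * y + (1 - q))^2
     - 2 * (p * mh + (1 - p) * (1 - mh)) * (q * y + (1 - q)) + 1"

definition prio_x0 :: "real \<Rightarrow> real \<Rightarrow> real \<Rightarrow> real \<Rightarrow> real" where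
  "prio_x0 p q mh y =
     (1 - (p * mh + (1 - p) * (1 - mh)) * (q * y + (1 - q)) - sqrt (prio_Delta p q mh y))
     / (2 * p * (1 - mh) * (q * y + (1 - q)))"

definition prio_x1 :: "real \<Rightarrow> real \<Rightarrow> real \<Rightarrow> real \<Rightarrow> real" where
  "prio_x1 p q mh y =
     (1 - (p * mh + (1 - p) * (1 - mh)) * (q * y + (1 - q)) + sqrt (prio_Delta p q mh y))
     / (2 * p * (1 - mh) * (q * y + (1 - q)))"

end

theory Submission
  imports Defs
begin


lemma prio_trans_nz:
  assumes "prio_trans p q mh ml s t \<noteq> 0"
  shows "s \<in> {(fst t - 1, snd t), (fst t - 1, snd t - 1), (fst t, snd t - 1), (Suc (fst t), snd t - 1),
              (Suc (fst t), snd t), (fst t, snd t), (fst t, Suc (snd t))}"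
  using assms
  apply (cases s; cases t)
  apply (auto simp: prio_trans_def Let_def split: if_splits)
  done

context fixes p q mh ml :: real begin
abbreviation "PT \<equiv> prio_trans p q mh ml"
lemma pt_up[simp]: "PT (a,b) (Suc a, b) = p*(1-q)*(1-mh)"
  by (simp add: prio_trans_def Let_def)
lemma pt_upup[simp]: "PT (a,b) (Suc a, Suc b) = p*q*(1-mh)"
  by (simp add: prio_trans_def Let_def)
lemma pt_r1[simp]: "PT (Suc a,b) (Suc a, Suc b) = p*q*mh+(1-p)*q*(1-mh)"
  by (simp add: prio_trans_def Let_def)
lemma pt_r0[simp]: "PT (0,b) (0, Suc b) = p*q*mh+(1-p)*q*(1-ml)"
  by (simp add: prio_trans_def Let_def)
lemma pt_diag[simp]: "PT (Suc a,b) (a, Suc b) = (1-p)*q*mh"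
  by (simp add: prio_trans_def Let_def)
lemma pt_down[simp]: "PT (Suc a,b) (a, b) = (1-p)*(1-q)*mh"
  by (simp add: prio_trans_def Let_def)
lemma pt_s1[simp]: "PT (Suc a,b) (Suc a, b) = (1-p)*(1-q)*(1-mh)+p*(1-q)*mh"
  by (simp add: prio_trans_def Let_def)
lemma pt_s0[simp]: "PT (0,Suc b) (0, Suc b) = (1-p)*(1-q)*(1-ml)+p*(1-q)*mh+(1-p)*q*ml"
  by (simp add: prio_trans_def Let_def)
lemma pt_s00[simp]: "PT (0,0) (0, 0) = (1-p)*(1-q)+p*(1-q)*mh+(1-p)*q*ml"
  by (simp add: prio_trans_def Let_def)
lemma pt_l0[simp]: "PT (0,Suc b) (0, b) = (1-p)*(1-q)*ml"
  by (simp add: prio_trans_def Let_def)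
lemma pt_l1[simp]: "PT (Suc a,Suc b) (Suc a, b) = 0"
  by (simp add: prio_trans_def Let_def)
end

lemma balance_sum:
  assumes "is_stationary (prio_trans p q mh ml) \<pi>"
  shows "\<pi> (i,j) = (\<Sum>s\<in>{(i - 1, j), (i - 1, j - 1), (i, j - 1), (Suc i, j - 1),
              (Suc i, j), (i, j), (i, Suc j)}. \<pi> s * prio_trans p q mh ml s (i,j))"
proof -
  let ?N = "{(i - 1, j), (i - 1, j - 1), (i, j - 1), (Suc i, j - 1),
              (Suc i, j), (i, j), (i, Suc j)}"
  let ?g = "\<lambda>s. \<pi> s * prio_trans p q mh ml s (i,j)"
  have h: "(?g has_sum \<pi> (i,j)) UNIV" using assms unfolding is_stationary_def by blast
  have "(?g has_sum \<pi> (i,j)) ?N"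
    using h by (subst (asm) has_sum_cong_neutral[where T="?N" and g="?g"])
       (use prio_trans_nz[of p q mh ml _ "(i,j)"] in auto)
  moreover have "(?g has_sum sum ?g ?N) ?N" by (intro has_sum_finite) auto
  ultimately show ?thesis using has_sum_unique by blast
qed

lemma bal_SS:
  assumes "is_stationary (prio_trans p q mh ml) \<pi>"
  shows "\<pi> (Suc a, Suc b) = p*(1-q)*(1-mh)*\<pi>(a,Suc b) + p*q*(1-mh)*\<pi>(a,b) + (p*q*mh+(1-p)*q*(1-mh))*\<pi>(Suc a,b)
     + (1-p)*q*mh*\<pi>(Suc(Suc a),b) + (1-p)*(1-q)*mh*\<pi>(Suc(Suc a),Suc b)
     + ((1-p)*(1-q)*(1-mh)+p*(1-q)*mh)*\<pi>(Suc a,Suc b)"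
proof -
  have e: "{(Suc a - 1, Suc b), (Suc a - 1, Suc b - 1), (Suc a, Suc b - 1), (Suc (Suc a), Suc b - 1),
              (Suc (Suc a), Suc b), (Suc a, Suc b), (Suc a, Suc (Suc b))} = {(a, Suc b), (a, b), (Suc a, b), (Suc (Suc a), b),
              (Suc (Suc a), Suc b), (Suc a, Suc b), (Suc a, Suc (Suc b))}" by auto
  show ?thesis using balance_sum[OF assms, of "Suc a" "Suc b"] unfolding e
  by (simp add: algebra_simps)
qed

lemma bal_S0:
  assumes "is_stationary (prio_trans p q mh ml) \<pi>"
  shows "\<pi> (Suc a, 0) = p*(1-q)*(1-mh)*\<pi>(a,0) 
     + (1-p)*(1-q)*mh*\<pi>(Suc(Suc a),0)
     + ((1-p)*(1-q)*(1-mh)+p*(1-q)*mh)*\<pi>(Suc a,0)"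
proof -
  have e: "{(Suc a - 1, 0), (Suc a - 1, 0 - 1), (Suc a, 0 - 1), (Suc (Suc a), 0 - 1),
              (Suc (Suc a), 0), (Suc a, 0), (Suc a, Suc 0)} = {(a, 0), (Suc a, 0), (Suc (Suc a), 0), (Suc a, Suc 0)}" by auto
  show ?thesis using balance_sum[OF assms, of "Suc a" "0"] unfolding e
  by (simp add: algebra_simps)
qed

lemma bal_0S:
  assumes "is_stationary (prio_trans p q mh ml) \<pi>"
  shows "\<pi> (0, Suc b) = (p*q*mh+(1-p)*q*(1-ml))*\<pi>(0,b)
     + (1-p)*q*mh*\<pi>(1,b) + (1-p)*(1-q)*mh*\<pi>(1,Suc b)
     + ((1-p)*(1-q)*(1-ml)+p*(1-q)*mh+(1-p)*q*ml)*\<pi>(0,Suc b)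
     + (1-p)*(1-q)*ml*\<pi>(0,Suc (Suc b))"
proof -
  have e: "{(0 - 1, Suc b), (0 - 1, Suc b - 1), (0, Suc b - 1), (Suc 0, Suc b - 1),
              (Suc 0, Suc b), (0, Suc b), (0, Suc (Suc b))} = {(0, Suc b), (0, b), (Suc 0, b), (Suc 0, Suc b), (0, Suc (Suc b))}" by auto
  show ?thesis using balance_sum[OF assms, of "0" "Suc b"] unfolding e
  by (simp add: algebra_simps)
qed

lemma bal_00:
  assumes "is_stationary (prio_trans p q mh ml) \<pi>"
  shows "\<pi> (0, 0) = ((1-p)*(1-q)+p*(1-q)*mh+(1-p)*q*ml)*\<pi>(0,0)
     + (1-p)*(1-q)*mh*\<pi>(1,0) + (1-p)*(1-q)*ml*\<pi>(0,1)"
proof -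
  have e: "{(0 - 1, 0::nat), (0 - 1, 0 - 1), (0, 0 - 1), (Suc 0, 0 - 1),
              (Suc 0, 0), (0, 0), (0, Suc 0)} = {(0, 0), (Suc 0, 0), (0, Suc 0)}" by auto
  show ?thesis using balance_sum[OF assms, of "0" "0"] unfolding e
  by (simp add: algebra_simps)
qed


lemma quad_aux:
  fixes a b m r x :: real
  assumes "a \<noteq> 0" "r^2 = m^2 - 4*a*b" "2*a*x = m - r \<or> 2*a*x = m + r"
  shows "a*x^2 - m*x + b = 0"
proof -
  have e1: "4*a*(a*x^2 - m*x + b) = (2*a*x - m)^2 - (m^2 - 4*a*b)" by algebra
  have "2*a*x - m = -r \<or> 2*a*x - m = r" using assms(3) by auto
  then have "(2*a*x - m)^2 = r^2" by auto
  then have "4*a*(a*x^2 - m*x + b) = 0" using e1 assms(2) by simp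
  then show ?thesis using assms(1) by simp
qed

lemma vieta:
  fixes a b m r x y :: real
  assumes "a \<noteq> 0" "r^2 = m^2 - 4*a*b" "2*a*x = m - r" "2*a*y = m + r"
  shows "a*(x+y) = m" "a*x*y = b"
proof -
  have "2*(a*(x+y)) = 2*a*x + 2*a*y" by algebra
  also have "\<dots> = 2*m" using assms by simp
  finally show "a*(x+y) = m" by simp
  have "4*a*(a*x*y) = (2*a*x)*(2*a*y)" by algebra
  also have "\<dots> = m^2 - r^2" unfolding assms(3) assms(4) by algebra
  also have "\<dots> = 4*a*b" using assms(2) by simp
  finally show "a*x*y = b" using assms(1) by simp
qed

locale prioq =
  fixes p q mh ml :: real and \<pi> :: "nat \<times> nat \<Rightarrow> real"
  assumes p0: "0<p" and p1: "p<1" and q0: "0<q" and q1: "q<1"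
    and mh0: "0<mh" and mh1: "mh<1" and ml0: "0<ml" and ml1: "ml<1"
    and psum: "p+q+mh+ml=1" and rho: "p/mh + q/ml < 1"
    and stat: "is_stationary (prio_trans p q mh ml) \<pi>"
begin

abbreviation "aa \<equiv> p*(1-q)*(1-mh)"
abbreviation "bb \<equiv> (1-p)*(1-q)*mh"
abbreviation "cc \<equiv> (1-p)*(1-q)*(1-mh)+p*(1-q)*mh"
abbreviation "X0 \<equiv> prio_x0 p q mh 0"
abbreviation "X1 \<equiv> prio_x1 p q mh 0"

lemma nonneg: "\<pi> s \<ge> 0" using stat unfolding is_stationary_def by blast
lemma hsum: "(\<pi> has_sum 1) UNIV" using stat unfolding is_stationary_def by blast

lemma col_summable: "summable (\<lambda>j. \<pi>(i,j))"
proof -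
  have s: "\<pi> summable_on UNIV" using hsum unfolding summable_on_def by blast
  have "(\<lambda>(x,y). \<pi>(x,y)) summable_on (UNIV \<times> UNIV)" using s by simp
  from summable_on_SigmaD1[of "\<lambda>x y. \<pi>(x,y)", OF this, of i]
  have "(\<lambda>j. \<pi>(i,j)) summable_on UNIV" by simp
  then show ?thesis using summable_on_UNIV_nonneg_real_iff[of "\<lambda>j. \<pi>(i,j)"] nonneg by simp
qed

lemma row_summable: "summable (\<lambda>i. \<pi>(i,j))"
proof -
  have "(\<pi> has_sum 1) (UNIV \<times> UNIV)" using hsum by simp
  then have "((\<lambda>(x,y). \<pi>(y,x)) has_sum 1) (UNIV \<times> UNIV)" using has_sum_swap by blast
  then have "(\<lambda>(x,y). \<pi>(y,x)) summable_on (UNIV \<times> UNIV)"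
    unfolding summable_on_def by blast
  from summable_on_SigmaD1[of "\<lambda>x y. \<pi>(y,x)", OF this, of j]
  have "(\<lambda>i. \<pi>(i,j)) summable_on UNIV" by simp
  then show ?thesis using summable_on_UNIV_nonneg_real_iff[of "\<lambda>i. \<pi>(i,j)"] nonneg by simp
qed

definition nu where "nu i = (\<Sum>j. \<pi>(i,j))"
definition ww where "ww j = (\<Sum>i. \<pi>(i,j))"

lemma nu_sums: "nu sums 1"
proof -
  have "(\<pi> has_sum 1) (Sigma UNIV (\<lambda>_. UNIV))" using hsum by simp
  moreover have "((\<lambda>j. \<pi>(i,j)) has_sum nu i) UNIV" for i
    unfolding nu_def by (rule sums_nonneg_imp_has_sum[OF summable_sums[OF col_summable]]) (rule nonneg)
  ultimately have "(nu has_sum 1) UNIV" by (rule has_sum_Sigma')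
  then show ?thesis by (rule has_sum_imp_sums)
qed

lemma ww_sums: "ww sums 1"
proof -
  have "(\<pi> has_sum 1) (UNIV \<times> UNIV)" using hsum by simp
  then have "((\<lambda>(x,y). \<pi>(y,x)) has_sum 1) (Sigma UNIV (\<lambda>_. UNIV))" using has_sum_swap by blast
  moreover have "((\<lambda>i. (\<lambda>(x,y). \<pi>(y,x)) (j,i)) has_sum ww j) UNIV" for j
    unfolding ww_def by simp (rule sums_nonneg_imp_has_sum[OF summable_sums[OF row_summable]], rule nonneg)
  ultimately have "(ww has_sum 1) UNIV" by (rule has_sum_Sigma')
  then show ?thesis by (rule has_sum_imp_sums)
qed

lemma roots:
  "0 < X0" "X0 < 1" "1 < X1" "aa*X0^2 - (1-cc)*X0 + bb = 0" "aa*X1^2 - (1-cc)*X1 + bb = 0"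
  "aa*(X0+X1) = 1-cc" "aa*X0*X1 = bb"
proof -
  define D where "D = prio_Delta p q mh 0"
  define r where "r = sqrt D"
  define sz where "sz = 1 - cc"
  have aa0: "aa > 0" using p0 q1 mh1 by simp
  have bb0: "bb > 0" using p1 q1 mh0 by simp
  have Deq: "D = sz^2 - 4*aa*bb" unfolding D_def sz_def prio_Delta_def by (simp add: power2_eq_square algebra_simps)
  have Deq2: "D = (2*aa - sz)^2 + 4*aa*q" unfolding D_def sz_def prio_Delta_def by (simp add: power2_eq_square algebra_simps)
  have szpos: "sz > 0"
  proof -
    have "cc < (1-p)*(1-q) + p*(1-q)" using p0 p1 q1 mh0 mh1
      by (intro add_strict_mono) (simp_all add: mult_strict_left_mono)
    also have "\<dots> = 1 - q" by algebra
    finally show ?thesis unfolding sz_def using q0 by simp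
  qed
  have Dpos: "D > (2*aa - sz)^2" using Deq2 aa0 q0 by simp
  have r1: "r > \<bar>2*aa - sz\<bar>" unfolding r_def
    using real_sqrt_less_mono[OF Dpos] by simp
  have "D < sz^2" using Deq aa0 bb0 by simp
  then have r2: "r < sz" unfolding r_def using real_sqrt_less_mono[of D "sz^2"] szpos by simp
  have r0: "r \<ge> 0" unfolding r_def using Dpos
    by (meson le_less_trans real_sqrt_ge_zero zero_le_power2 order.strict_implies_order)
  have rr: "r^2 = D" unfolding r_def using Dpos
    by (meson le_less_trans real_sqrt_pow2 zero_le_power2 order.strict_implies_order)
  have x0e: "X0 = (sz - r)/(2*aa)" unfolding prio_x0_def r_def D_def sz_def by (simp add: algebra_simps)
  have x1e: "X1 = (sz + r)/(2*aa)" unfolding prio_x1_def r_def D_def sz_def by (simp add: algebra_simps)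
  show "0 < X0" unfolding x0e using r2 aa0 by simp
  show "X0 < 1" unfolding x0e using r1 aa0 by (simp add: field_simps)
  show "1 < X1" unfolding x1e using r1 aa0 by (simp add: field_simps)
  have t0: "2*aa*X0 = sz - r" unfolding x0e using p0 q1 mh1 by simp
  have t1: "2*aa*X1 = sz + r" unfolding x1e using p0 q1 mh1 by simp
  show "aa*X0^2 - (1-cc)*X0 + bb = 0" using quad_aux[OF _ rr[unfolded Deq] ] t0 p0 q1 mh1 sz_def by simp
  show "aa*X1^2 - (1-cc)*X1 + bb = 0" using quad_aux[OF _ rr[unfolded Deq] ] t1 p0 q1 mh1 sz_def by simp
  show "aa*(X0+X1) = 1-cc" using vieta[OF _ rr[unfolded Deq] t0 t1] p0 q1 mh1 sz_def by simp
  show "aa*X0*X1 = bb" using vieta[OF _ rr[unfolded Deq] t0 t1] p0 q1 mh1 sz_def by simp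
qed

end


lemma inv_root:
  fixes a b m X :: real
  assumes "X \<noteq> 0" "a*X^2 - m*X + b = 0"
  shows "b*(1/X)^2 - m*(1/X) + a = 0"
proof -
  have "b*(1/X)^2 - m*(1/X) + a = (a*X^2 - m*X + b)/X^2" using assms(1)
    by (simp add: field_simps power2_eq_square)
  then show ?thesis using assms(2) by simp
qed

lemma rec_closed:
  fixes u :: "nat \<Rightarrow> real"
  assumes b: "b \<noteq> 0" and rec: "\<And>n. b*u(Suc(Suc n)) = m*u(Suc n) - a*u n"
    and w: "b*w^2 - m*w + a = 0" and z: "b*z^2 - m*z + a = 0" and u0: "u 0 = 0"
  shows "u n * (w - z) = u 1 * (w^n - z^n)"
proof -
  have "u n * (w - z) = u 1 * (w^n - z^n) \<and> u (Suc n) * (w - z) = u 1 * (w^(Suc n) - z^(Suc n))"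
  proof (induction n)
    case 0 then show ?case using u0 by simp
  next
    case (Suc n)
    have wn: "b*w^(Suc(Suc n)) = m*w^(Suc n) - a*w^n"
    proof -
      have "b*w^(Suc(Suc n)) - m*w^(Suc n) + a*w^n = w^n*(b*w^2 - m*w + a)"
        by (simp add: algebra_simps power2_eq_square)
      then show ?thesis using w by simp
    qed
    have zn: "b*z^(Suc(Suc n)) = m*z^(Suc n) - a*z^n"
    proof -
      have "b*z^(Suc(Suc n)) - m*z^(Suc n) + a*z^n = z^n*(b*z^2 - m*z + a)"
        by (simp add: algebra_simps power2_eq_square)
      then show ?thesis using z by simp
    qed
    have "b*(u (Suc (Suc n)) * (w - z)) = (m*u(Suc n) - a*u n)*(w-z)" using rec[of n] by simp
    also have "\<dots> = m*(u (Suc n)*(w-z)) - a*(u n*(w-z))" by (simp add: algebra_simps)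
    also have "\<dots> = m*(u 1 * (w^(Suc n) - z^(Suc n))) - a*(u 1 * (w^n - z^n))" using Suc by simp
    also have "\<dots> = u 1 * ((m*w^(Suc n) - a*w^n) - (m*z^(Suc n) - a*z^n))" by (simp add: algebra_simps)
    also have "\<dots> = b*(u 1 * (w^(Suc (Suc n)) - z^(Suc (Suc n))))" unfolding wn[symmetric] zn[symmetric]
      by (simp add: algebra_simps)
    finally have "u (Suc (Suc n)) * (w - z) = u 1 * (w^(Suc (Suc n)) - z^(Suc (Suc n)))" using b by simp
    then show ?case using Suc by simp
  qed
  then show ?thesis by simp
qed

lemma lim_closed:
  fixes u :: "nat \<Rightarrow> real"
  assumes u: "u \<longlonglongrightarrow> 0" and w: "w > 1" and z: "0 \<le> z" "z < 1"
    and cl: "\<And>n. u n * (w - z) = u 1 * (w^n - z^n)"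
  shows "u 1 = 0"
proof -
  have "(\<lambda>n. u n * (1/w)^n) \<longlonglongrightarrow> 0 * 0"
    by (intro tendsto_mult u LIMSEQ_power_zero) (use w in simp)
  then have l0: "(\<lambda>n. u n * (1/w)^n) \<longlonglongrightarrow> 0" by simp
  have l1: "(\<lambda>n. u n * (1/w)^n * (w - z)) \<longlonglongrightarrow> 0" using tendsto_mult_left_zero[OF l0] .
  have e: "u n * (1/w)^n * (w - z) = u 1 * (1 - (z/w)^n)" for n
  proof -
    have "u n * (1/w)^n * (w - z) = (u n * (w - z)) * (1/w)^n" by (simp only: mult_ac)
    also have "\<dots> = u 1 * (w^n - z^n) * (1/w)^n" by (simp only: cl)
    also have "\<dots> = u 1 * (1 - (z/w)^n)" using w by (simp add: field_simps power_divide)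
    finally show ?thesis .
  qed
  have "(\<lambda>n. u 1 * (1 - (z/w)^n)) \<longlonglongrightarrow> u 1 * (1 - 0)"
  proof (intro tendsto_intros LIMSEQ_power_zero)
    have "z/w < 1" using w z by (subst divide_less_eq_1_pos) auto
    moreover have "z/w \<ge> 0" using w z by simp
    ultimately show "norm (z/w) < 1" by simp
  qed
  then have "(\<lambda>n. u n * (1/w)^n * (w - z)) \<longlonglongrightarrow> u 1" using e by simp
  with l1 show ?thesis using LIMSEQ_unique by blast
qed

lemma rec_lin:
  fixes A B C X Y Z X' Y' Z' k :: real
  assumes "Y = A*X + B*Z + C*Y" "B*Z' = (1-C)*Y' - A*X'"
  shows "B*(Z - k*Z') = (1-C)*(Y - k*Y') - A*(X - k*X')"
  using assms by algebra

context prioq begin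

definition "z0 = 1 / X1"
definition "w0 = 1 / X0"

lemma z0_props: "0 < z0" "z0 < 1" "w0 > 1" "bb*z0^2 - (1-cc)*z0 + aa = 0" "bb*w0^2 - (1-cc)*w0 + aa = 0"
proof -
  show "0 < z0" using roots(3) unfolding z0_def by simp
  show "z0 < 1" using roots(3) unfolding z0_def by simp
  show "w0 > 1" using roots(1,2) unfolding w0_def by simp
  show "bb*z0^2 - (1-cc)*z0 + aa = 0" unfolding z0_def
    by (rule inv_root[OF _ roots(5)]) (use roots(3) in simp)
  show "bb*w0^2 - (1-cc)*w0 + aa = 0" unfolding w0_def
    by (rule inv_root[OF _ roots(4)]) (use roots(1) in simp)
qed

lemma bb_nz: "bb \<noteq> 0" using p1 q1 mh0 by simp

lemma row0: "\<pi>(n,0) = \<pi>(0,0) * z0^n"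
proof -
  define u where "u n = \<pi>(n,0) - \<pi>(0,0) * z0^n" for n
  have rec: "bb*u(Suc(Suc n)) = (1-cc)*u(Suc n) - aa*u n" for n
  proof -
    have b: "\<pi>(Suc n,0) = aa*\<pi>(n,0) + bb*\<pi>(Suc(Suc n),0) + cc*\<pi>(Suc n,0)"
      using bal_S0[OF stat, of n] by simp
    have zz: "bb*z0^(Suc(Suc n)) = (1-cc)*z0^(Suc n) - aa*z0^n"
    proof -
      have "bb*z0^(Suc(Suc n)) - (1-cc)*z0^(Suc n) + aa*z0^n = z0^n*(bb*z0^2 - (1-cc)*z0 + aa)"
        by (simp add: algebra_simps power2_eq_square)
      then show ?thesis using z0_props(4) by simp
    qed
    show ?thesis unfolding u_def using rec_lin[OF b zz] .
  qed
  have cl: "u n * (w0 - z0) = u 1 * (w0^n - z0^n)" for n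
    by (rule rec_closed[where u=u and b=bb and m="1-cc" and a=aa and w=w0 and z=z0])
      (use bb_nz rec z0_props(4,5) in \<open>auto simp: u_def\<close>)
  have ulim: "u \<longlonglongrightarrow> 0"
  proof -
    have "(\<lambda>n. \<pi>(n,0)) \<longlonglongrightarrow> 0" by (rule summable_LIMSEQ_zero[OF row_summable])
    moreover have "(\<lambda>n. \<pi>(0,0) * z0^n) \<longlonglongrightarrow> \<pi>(0,0) * 0"
      by (intro tendsto_intros LIMSEQ_power_zero) (use z0_props in simp)
    ultimately show ?thesis unfolding u_def[abs_def] using tendsto_diff by fastforce
  qed
  have u1: "u 1 = 0" using lim_closed[OF ulim z0_props(3) _ z0_props(2) cl] z0_props(1) by simp
  have "w0 \<noteq> z0" using z0_props by simp
  then have "u n = 0" using cl[of n] u1 by simp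
  then show ?thesis unfolding u_def by simp
qed

lemma phi_sums:
  fixes x :: complex assumes x: "cmod x \<le> 1"
  shows "(\<lambda>i. complex_of_real (\<pi>(i,j)) * x^i) sums gen_phi \<pi> j x"
proof -
  have "summable (\<lambda>i. complex_of_real (\<pi>(i,j)) * x^i)"
  proof (rule summable_comparison_test'[OF row_summable, of 0])
    fix n
    have "norm (complex_of_real (\<pi>(n,j)) * x^n) = \<pi>(n,j) * cmod x ^ n"
      using nonneg by (simp add: norm_mult norm_power)
    also have "\<dots> \<le> \<pi>(n,j) * 1" using nonneg x
      by (intro mult_left_mono power_le_one) auto
    finally show "norm (complex_of_real (\<pi>(n,j)) * x^n) \<le> \<pi>(n,j)" by simp
  qed
  then show ?thesis unfolding gen_phi_def by (rule summable_sums)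
qed

lemma phi0:
  fixes x :: complex assumes x: "cmod x \<le> 1"
  shows "gen_phi \<pi> 0 x = \<pi> (0, 0) / (1 - (1 / prio_x1 p q mh 0) * x)"
proof -
  have n: "norm (complex_of_real z0 * x) < 1"
  proof -
    have "norm (complex_of_real z0 * x) = z0 * cmod x" using z0_props by (simp add: norm_mult)
    also have "\<dots> \<le> z0" using x z0_props by (simp add: mult_left_le)
    finally show ?thesis using z0_props by simp
  qed
  have "(\<lambda>i. complex_of_real (\<pi>(0,0)) * (complex_of_real z0 * x)^i) sums (complex_of_real (\<pi>(0,0)) * (1 / (1 - complex_of_real z0 * x)))"
    by (intro sums_mult geometric_sums n)
  moreover have "(\<lambda>i. complex_of_real (\<pi>(0,0)) * (complex_of_real z0 * x)^i) = (\<lambda>i. complex_of_real (\<pi>(i,0)) * x^i)"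
  proof
    fix i show "complex_of_real (\<pi>(0,0)) * (complex_of_real z0 * x)^i = complex_of_real (\<pi>(i,0)) * x^i"
      using row0[of i] by (simp add: power_mult_distrib)
  qed
  ultimately have "(\<lambda>i. complex_of_real (\<pi>(i,0)) * x^i) sums (complex_of_real (\<pi>(0,0)) * (1 / (1 - complex_of_real z0 * x)))" by simp
  from sums_unique2[OF phi_sums[OF x] this] show ?thesis unfolding z0_def by simp
qed

end


lemma series_shift_eq:
  fixes x :: "'a::real_normed_field" and c d :: "nat \<Rightarrow> real"
  assumes F: "(\<lambda>i. of_real (c i) * x^i) sums F" and G: "(\<lambda>i. of_real (d i) * x^i) sums G"
    and rec: "\<And>i. c (Suc i) = \<alpha>*c i + \<beta>*d i + \<gamma>*d (Suc i) + \<delta>*d (Suc (Suc i)) + \<epsilon>*c (Suc (Suc i)) + \<kappa>*c (Suc i)"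
  shows "x*(F - of_real (c 0)) = of_real \<alpha>*x^2*F + of_real \<beta>*x^2*G + of_real \<gamma>*x*(G - of_real (d 0))
     + of_real \<delta>*(G - of_real (d 0) - of_real (d 1)*x) + of_real \<epsilon>*(F - of_real (c 0) - of_real (c 1)*x)
     + of_real \<kappa>*x*(F - of_real (c 0))"
proof -
  define f where "f i = of_real (c i) * x^i" for i
  define g where "g i = of_real (d i) * x^i" for i
  have F0: "f sums F" using F unfolding f_def .
  have G0: "g sums G" using G unfolding g_def .
  have F1: "(\<lambda>i. f (Suc i)) sums (F - of_real (c 0))"
    using F0 by (subst sums_Suc_iff) (simp add: f_def)
  have G1: "(\<lambda>i. g (Suc i)) sums (G - of_real (d 0))"
    using G0 by (subst sums_Suc_iff) (simp add: g_def)
  have F2: "(\<lambda>i. f (Suc (Suc i))) sums (F - of_real (c 0) - of_real (c 1)*x)"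
    using F1 by (subst sums_Suc_iff[where f="\<lambda>i. f (Suc i)"]) (simp add: f_def)
  have G2: "(\<lambda>i. g (Suc (Suc i))) sums (G - of_real (d 0) - of_real (d 1)*x)"
    using G1 by (subst sums_Suc_iff[where f="\<lambda>i. g (Suc i)"]) (simp add: g_def)
  have L: "(\<lambda>i. x * f (Suc i)) sums (x*(F - of_real (c 0)))"
    by (rule sums_mult[OF F1])
  have R: "(\<lambda>i. of_real \<alpha>*x^2*f i + of_real \<beta>*x^2*g i + of_real \<gamma>*x*g (Suc i)
     + of_real \<delta>*g (Suc (Suc i)) + of_real \<epsilon>*f (Suc (Suc i))
     + of_real \<kappa>*x*f (Suc i)) sums (of_real \<alpha>*x^2*F + of_real \<beta>*x^2*G + of_real \<gamma>*x*(G - of_real (d 0))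
     + of_real \<delta>*(G - of_real (d 0) - of_real (d 1)*x) + of_real \<epsilon>*(F - of_real (c 0) - of_real (c 1)*x)
     + of_real \<kappa>*x*(F - of_real (c 0)))"
    by (intro sums_add sums_mult F0 G0 F1 G1 F2 G2)
  have eq: "x * f (Suc i) = of_real \<alpha>*x^2*f i + of_real \<beta>*x^2*g i + of_real \<gamma>*x*g (Suc i)
     + of_real \<delta>*g (Suc (Suc i)) + of_real \<epsilon>*f (Suc (Suc i))
     + of_real \<kappa>*x*f (Suc i)" for i
  proof -
    have "x * f (Suc i) = of_real (c (Suc i)) * x^(Suc (Suc i))" unfolding f_def by (simp add: algebra_simps)
    also have "\<dots> = of_real (\<alpha>*c i + \<beta>*d i + \<gamma>*d (Suc i) + \<delta>*d (Suc (Suc i)) + \<epsilon>*c (Suc (Suc i)) + \<kappa>*c (Suc i)) * x^(Suc (Suc i))"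
      using rec[of i] by simp
    also have "\<dots> = of_real \<alpha>*x^2*f i + of_real \<beta>*x^2*g i + of_real \<gamma>*x*g (Suc i)
     + of_real \<delta>*g (Suc (Suc i)) + of_real \<epsilon>*f (Suc (Suc i))
     + of_real \<kappa>*x*f (Suc i)"
      unfolding f_def g_def by (simp add: algebra_simps power2_eq_square)
    finally show ?thesis .
  qed
  from L have "(\<lambda>i. of_real \<alpha>*x^2*f i + of_real \<beta>*x^2*g i + of_real \<gamma>*x*g (Suc i)
     + of_real \<delta>*g (Suc (Suc i)) + of_real \<epsilon>*f (Suc (Suc i))
     + of_real \<kappa>*x*f (Suc i)) sums (x*(F - of_real (c 0)))" unfolding eq .
  from sums_unique2[OF this R] show ?thesis .
qed

lemma kernel_combine:
  fixes x F G c0 c1 c2 d0 d1 \<alpha> \<beta> \<gamma> \<delta> \<epsilon> \<kappa> g' c' b'' :: "'a::field"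
  assumes e1: "x*(F - c0) = \<alpha>*x^2*F + \<beta>*x^2*G + \<gamma>*x*(G - d0) + \<delta>*(G - d0 - d1*x) + \<epsilon>*(F - c0 - c1*x) + \<kappa>*x*(F - c0)"
    and e2: "c0 = g'*d0 + \<delta>*d1 + \<epsilon>*c1 + c'*c0 + b''*c2"
  shows "(\<alpha>*x^2 - (1-\<kappa>)*x + \<epsilon>) * F = - (\<beta>*x^2 + \<gamma>*x + \<delta>) * G + d0*(\<delta> + (\<gamma> - g')*x) + c0*(\<epsilon> + (\<kappa> - c')*x) - b''*x*c2"
  using assms by algebra


lemma of_real_lin5:
  fixes c0 g' d0 \<delta> d1 \<epsilon> c1 c' b'' c2 :: real
  assumes "c0 = g'*d0 + \<delta>*d1 + \<epsilon>*c1 + c'*c0 + b''*c2"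
  shows "(of_real c0::'a::real_algebra_1) = of_real g'* of_real d0 + of_real \<delta>* of_real d1 + of_real \<epsilon>* of_real c1 + of_real c'* of_real c0 + of_real b''* of_real c2"
  by (subst assms) (simp only: of_real_add of_real_mult)

lemma final_alg:
  fixes p q mh ml x x0 x1 F G G0 c0 c2 d0 :: complex
  defines "\<alpha> \<equiv> p*(1-q)*(1-mh)" and "\<beta> \<equiv> p*q*(1-mh)" and "\<gamma> \<equiv> p*q*mh+(1-p)*q*(1-mh)"
    and "\<delta> \<equiv> (1-p)*q*mh" and "\<epsilon> \<equiv> (1-p)*(1-q)*mh" and "\<kappa> \<equiv> (1-p)*(1-q)*(1-mh)+p*(1-q)*mh"
    and "g' \<equiv> p*q*mh+(1-p)*q*(1-ml)" and "c' \<equiv> (1-p)*(1-q)*(1-ml)+p*(1-q)*mh+(1-p)*q*ml"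
    and "b'' \<equiv> (1-p)*(1-q)*ml"
  assumes K: "(\<alpha>*x^2 - (1-\<kappa>)*x + \<epsilon>) * F = - (\<beta>*x^2 + \<gamma>*x + \<delta>) * G + d0*(\<delta> + (\<gamma> - g')*x) + c0*(\<epsilon> + (\<kappa> - c')*x) - b''*x*c2"
    and K0: "0 = - (\<beta>*x0^2 + \<gamma>*x0 + \<delta>) * G0 + d0*(\<delta> + (\<gamma> - g')*x0) + c0*(\<epsilon> + (\<kappa> - c')*x0) - b''*x0*c2"
    and v1: "\<alpha>*(x0+x1) = 1-\<kappa>" and v2: "\<alpha>*x0*x1 = \<epsilon>"
    and nz: "x \<noteq> x0" "x \<noteq> x1" "p \<noteq> 0" "q \<noteq> 1" "mh \<noteq> 1"
  shows "F = ((((1 - p) * (1 - q) * (ml - mh) - (1 - p) * q * ml) * c0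
                   - (1 - p) * (1 - q) * ml * c2
                   + (1 - p) * q * (ml - mh) * d0)
                  - q * ((1 - p) * (1 - mh) + p * mh) * G0)
                 / (p * (1 - q) * (1 - mh)) / (x - x1)
              - q * G0 * (x + x0) / ((1 - q) * (x - x1))
              - q * (p * x + (1 - p)) * ((1 - mh) * x + mh) / (p * (1 - q) * (1 - mh) * (x - x1))
                * ((G - G0) / (x - x0))"
proof -
  have a0: "\<alpha> \<noteq> 0" using nz unfolding \<alpha>_def by simp
  have Kf: "\<alpha>*x^2 - (1-\<kappa>)*x + \<epsilon> = \<alpha>*(x-x0)*(x-x1)"
    unfolding v1[symmetric] v2[symmetric] by algebra
  have A: "\<beta>*x^2 + \<gamma>*x + \<delta> = q * (p * x + (1 - p)) * ((1 - mh) * x + mh)"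
    unfolding \<beta>_def \<gamma>_def \<delta>_def by algebra
  define B1 where "B1 = d0*(\<gamma> - g') + c0*(\<kappa> - c') - b''*c2"
  have N: "\<alpha>*(x-x0)*(x-x1) * F = - (\<beta>*x^2 + \<gamma>*x + \<delta>) * (G - G0) + (x - x0) * (B1 - (\<beta>*(x+x0) + \<gamma>)*G0)"
  proof -
    have "\<alpha>*(x-x0)*(x-x1) * F = - (\<beta>*x^2 + \<gamma>*x + \<delta>) * G + d0*(\<delta> + (\<gamma> - g')*x) + c0*(\<epsilon> + (\<kappa> - c')*x) - b''*x*c2
       - (- (\<beta>*x0^2 + \<gamma>*x0 + \<delta>) * G0 + d0*(\<delta> + (\<gamma> - g')*x0) + c0*(\<epsilon> + (\<kappa> - c')*x0) - b''*x0*c2)"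
      using K K0 Kf by simp
    also have "\<dots> = - (\<beta>*x^2 + \<gamma>*x + \<delta>) * (G - G0) + (x - x0) * (B1 - (\<beta>*(x+x0) + \<gamma>)*G0)"
      unfolding B1_def by algebra
    finally show ?thesis .
  qed
  have B1e: "B1 = ((1 - p) * (1 - q) * (ml - mh) - (1 - p) * q * ml) * c0
                   - (1 - p) * (1 - q) * ml * c2
                   + (1 - p) * q * (ml - mh) * d0"
    unfolding B1_def \<gamma>_def g'_def \<kappa>_def c'_def b''_def by algebra
  have g: "\<gamma> = q * ((1 - p) * (1 - mh) + p * mh)" unfolding \<gamma>_def by algebra
  have bq: "\<beta> = \<alpha> * q / (1 - q)" unfolding \<alpha>_def \<beta>_def using nz by (simp add: field_simps)
  have xx0: "x - x0 \<noteq> 0" "x - x1 \<noteq> 0" using nz by auto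
  define AA where "AA = \<beta>*x^2 + \<gamma>*x + \<delta>"
  define Q where "Q = B1 - (\<beta>*(x+x0) + \<gamma>)*G0"
  have R: "(- AA*(G-G0)/(x-x0) + Q) * (x - x0) = -AA*(G-G0) + Q*(x-x0)" using xx0 by (simp add: field_simps)
  have "(F * (\<alpha>*(x-x1))) * (x - x0) = -AA*(G-G0) + Q*(x-x0)" using N unfolding AA_def Q_def by algebra
  then have "(F * (\<alpha>*(x-x1))) * (x - x0) = (- AA*(G-G0)/(x-x0) + Q) * (x - x0)" using R by simp
  then have "F * (\<alpha>*(x-x1)) = - AA*(G-G0)/(x-x0) + Q" using xx0 by simp
  then have F: "F = (- (\<beta>*x^2 + \<gamma>*x + \<delta>) * (G - G0) / (x - x0) + (B1 - (\<beta>*(x+x0) + \<gamma>)*G0)) / (\<alpha> * (x - x1))"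
    using a0 xx0 unfolding AA_def Q_def by (simp add: eq_divide_eq)
  define U where "U = (G - G0) / (x - x0)"
  have F2: "F = (- AA*U + Q)/(\<alpha>*(x-x1))"
    unfolding F U_def AA_def Q_def by (simp add: minus_divide_left)
  have step: "(- AA*U + Q)/(\<alpha>*(x-x1)) = (B1 - \<gamma>*G0)/\<alpha>/(x-x1) - (\<beta>/\<alpha>)*G0*(x+x0)/(x-x1) - AA/(\<alpha>*(x-x1))*U"
  proof -
    have "(- AA*U + Q)/(\<alpha>*(x-x1)) = ((B1 - \<gamma>*G0) - \<beta>*G0*(x+x0) - AA*U)/(\<alpha>*(x-x1))"
      unfolding Q_def by (simp add: algebra_simps)
    also have "\<dots> = (B1 - \<gamma>*G0)/(\<alpha>*(x-x1)) - \<beta>*G0*(x+x0)/(\<alpha>*(x-x1)) - AA*U/(\<alpha>*(x-x1))"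
      by (simp add: diff_divide_distrib)
    also have "(B1 - \<gamma>*G0)/(\<alpha>*(x-x1)) = (B1 - \<gamma>*G0)/\<alpha>/(x-x1)" by (simp add: divide_divide_eq_left)
    also have "\<beta>*G0*(x+x0)/(\<alpha>*(x-x1)) = (\<beta>/\<alpha>)*G0*(x+x0)/(x-x1)" by (simp add: divide_divide_eq_left)
    also have "AA*U/(\<alpha>*(x-x1)) = AA/(\<alpha>*(x-x1))*U" by simp
    finally show ?thesis .
  qed
  have ba: "\<beta>/\<alpha> = q/(1-q)"
  proof -
    have k: "p*(1-mh) \<noteq> 0" using nz by simp
    have "\<beta>/\<alpha> = (q*(p*(1-mh)))/((1-q)*(p*(1-mh)))" unfolding \<alpha>_def \<beta>_def by (simp add: mult_ac)
    also have "\<dots> = q/(1-q)" using k by (rule nonzero_mult_divide_mult_cancel_right)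
    finally show ?thesis .
  qed
  have t1: "(B1 - \<gamma>*G0)/\<alpha> = ((((1 - p) * (1 - q) * (ml - mh) - (1 - p) * q * ml) * c0
                   - (1 - p) * (1 - q) * ml * c2
                   + (1 - p) * q * (ml - mh) * d0)
                  - q * ((1 - p) * (1 - mh) + p * mh) * G0)
                 / (p * (1 - q) * (1 - mh))" unfolding B1e g \<alpha>_def by simp
  have t2: "(\<beta>/\<alpha>)*G0*(x+x0)/(x-x1) = q * G0 * (x + x0) / ((1 - q) * (x - x1))" unfolding ba by simp
  have t3: "AA/(\<alpha>*(x-x1)) = q * (p * x + (1 - p)) * ((1 - mh) * x + mh) / (p * (1 - q) * (1 - mh) * (x - x1))"
    unfolding AA_def A \<alpha>_def by simp
  have "F = (B1 - \<gamma>*G0)/\<alpha>/(x-x1) - (\<beta>/\<alpha>)*G0*(x+x0)/(x-x1) - AA/(\<alpha>*(x-x1))*U"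
    using F2 step by simp
  then show ?thesis unfolding t1 t2 t3 U_def .
qed

context prioq begin

lemma kernel:
  fixes x :: "'a::real_normed_field"
  assumes F: "(\<lambda>i. of_real (\<pi>(i,Suc b)) * x^i) sums F" and G: "(\<lambda>i. of_real (\<pi>(i,b)) * x^i) sums G"
  shows "(of_real aa*x^2 - (1 - of_real cc)*x + of_real bb) * F
     = - (of_real (p*q*(1-mh))*x^2 + of_real (p*q*mh+(1-p)*q*(1-mh))*x + of_real ((1-p)*q*mh)) * G
       + of_real (\<pi>(0,b))*(of_real ((1-p)*q*mh) + (of_real (p*q*mh+(1-p)*q*(1-mh)) - of_real (p*q*mh+(1-p)*q*(1-ml)))*x)
       + of_real (\<pi>(0,Suc b))*(of_real bb + (of_real cc - of_real ((1-p)*(1-q)*(1-ml)+p*(1-q)*mh+(1-p)*q*ml))*x)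
       - of_real ((1-p)*(1-q)*ml)*x* of_real (\<pi>(0,Suc(Suc b)))"
proof -
  note e1 = series_shift_eq[OF F G, of aa "p*q*(1-mh)" "p*q*mh+(1-p)*q*(1-mh)" "(1-p)*q*mh" bb cc, OF bal_SS[OF stat]]
  note e2 = of_real_lin5[OF bal_0S[OF stat, of b], where 'a='a]
  show ?thesis using kernel_combine[OF e1 e2] by simp
qed


lemma rowj:
  fixes x :: complex and b :: nat
  assumes x: "cmod x \<le> 1" "x \<noteq> prio_x0 p q mh 0"
  shows "gen_phi \<pi> (Suc b) x = ((((1 - of_real p) * (1 - of_real q) * (of_real ml - of_real mh) - (1 - of_real p) * of_real q * of_real ml) * of_real (\<pi>(0,Suc b))
                   - (1 - of_real p) * (1 - of_real q) * of_real ml * of_real (\<pi>(0,Suc (Suc b)))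
                   + (1 - of_real p) * of_real q * (of_real ml - of_real mh) * of_real (\<pi>(0,b)))
                  - of_real q * ((1 - of_real p) * (1 - of_real mh) + of_real p * of_real mh) * gen_phi \<pi> b (of_real X0))
                 / (of_real p * (1 - of_real q) * (1 - of_real mh)) / (x - of_real X1)
              - of_real q * gen_phi \<pi> b (of_real X0) * (x + of_real X0) / ((1 - of_real q) * (x - of_real X1))
              - of_real q * (of_real p * x + (1 - of_real p)) * ((1 - of_real mh) * x + of_real mh) / (of_real p * (1 - of_real q) * (1 - of_real mh) * (x - of_real X1))
                * ((gen_phi \<pi> b x - gen_phi \<pi> b (of_real X0)) / (x - of_real X0))"
proof -
  have x0n: "cmod (complex_of_real X0) \<le> 1" using roots(1,2) by simp
  note K = kernel[OF phi_sums[OF x(1)] phi_sums[OF x(1)]]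
  note K0a = kernel[OF phi_sums[OF x0n] phi_sums[OF x0n]]
  have z: "(of_real aa * (complex_of_real X0)^2 - (1 - of_real cc) * complex_of_real X0 + of_real bb) = 0"
  proof -
    have "(of_real aa * (complex_of_real X0)^2 - (1 - of_real cc) * complex_of_real X0 + of_real bb) = of_real (aa*X0^2 - (1-cc)*X0 + bb)"
      by simp
    also have "\<dots> = 0" using roots(4) by simp
    finally show ?thesis .
  qed
  have K0: "0 = - (of_real (p*q*(1-mh))*(complex_of_real X0)^2 + of_real (p*q*mh+(1-p)*q*(1-mh))*complex_of_real X0 + of_real ((1-p)*q*mh)) * gen_phi \<pi> b (of_real X0)
       + of_real (\<pi>(0,b))*(of_real ((1-p)*q*mh) + (of_real (p*q*mh+(1-p)*q*(1-mh)) - of_real (p*q*mh+(1-p)*q*(1-ml)))*complex_of_real X0)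
       + of_real (\<pi>(0,Suc b))*(of_real bb + (of_real cc - of_real ((1-p)*(1-q)*(1-ml)+p*(1-q)*mh+(1-p)*q*ml))*complex_of_real X0)
       - of_real ((1-p)*(1-q)*ml)*complex_of_real X0 * of_real (\<pi>(0,Suc(Suc b)))"
    using K0a unfolding z by simp
  have v1: "complex_of_real aa * (of_real X0 + of_real X1) = 1 - of_real cc"
    using arg_cong[OF roots(6), of "complex_of_real"] by simp
  have v2: "complex_of_real aa * of_real X0 * of_real X1 = of_real bb"
    using arg_cong[OF roots(7), of "complex_of_real"] by simp
  have nx1: "x \<noteq> of_real X1"
  proof
    assume "x = of_real X1" then have "cmod x = X1" using roots(3) by simp
    then show False using x(1) roots(3) by simp
  qed
  have nz: "x \<noteq> of_real X0" "x \<noteq> of_real X1" "complex_of_real p \<noteq> 0" "complex_of_real q \<noteq> 1" "complex_of_real mh \<noteq> 1"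
    using x(2) nx1 p0 q1 mh1 by auto
  note K' = K[simplified of_real_add of_real_mult of_real_diff of_real_1]
  note K0' = K0[simplified of_real_add of_real_mult of_real_diff of_real_1]
  note v1' = v1[simplified of_real_add of_real_mult of_real_diff of_real_1]
  note v2' = v2[simplified of_real_add of_real_mult of_real_diff of_real_1]
  show ?thesis
    by (rule final_alg[OF K' K0' v1' v2' nz])
qed

end


context prioq begin

lemma colS: "(\<lambda>b. \<pi>(k,b)) sums nu k"
  unfolding nu_def by (rule summable_sums[OF col_summable])
lemma colS1: "(\<lambda>b. \<pi>(k,Suc b)) sums (nu k - \<pi>(k,0))"
  using colS[of k] by (subst sums_Suc_iff) simp

lemma nu_rec0: "p*(1-mh)*nu 0 = (1-p)*mh*nu 1"
proof -
  have s1: "(\<lambda>b. (p*q*mh+(1-p)*q*(1-ml))*\<pi>(0,b)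
     + (1-p)*q*mh*\<pi>(1,b) + (1-p)*(1-q)*mh*\<pi>(1,Suc b)
     + ((1-p)*(1-q)*(1-ml)+p*(1-q)*mh+(1-p)*q*ml)*\<pi>(0,Suc b)
     + (1-p)*(1-q)*ml*\<pi>(0,Suc (Suc b))) sums
     ((p*q*mh+(1-p)*q*(1-ml))*nu 0 + (1-p)*q*mh*nu 1 + (1-p)*(1-q)*mh*(nu 1 - \<pi>(1,0))
     + ((1-p)*(1-q)*(1-ml)+p*(1-q)*mh+(1-p)*q*ml)*(nu 0 - \<pi>(0,0))
     + (1-p)*(1-q)*ml*(nu 0 - \<pi>(0,0) - \<pi>(0,1)))"
  proof -
    have c2: "(\<lambda>b. \<pi>(0,Suc (Suc b))) sums (nu 0 - \<pi>(0,0) - \<pi>(0,1))"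
      using colS1[of 0] by (subst sums_Suc_iff[where f="\<lambda>b. \<pi>(0,Suc b)"]) simp
    show ?thesis by (intro sums_add sums_mult colS colS1 c2)
  qed
  have fe: "(\<lambda>b. (p*q*mh+(1-p)*q*(1-ml))*\<pi>(0,b)
     + (1-p)*q*mh*\<pi>(1,b) + (1-p)*(1-q)*mh*\<pi>(1,Suc b)
     + ((1-p)*(1-q)*(1-ml)+p*(1-q)*mh+(1-p)*q*ml)*\<pi>(0,Suc b)
     + (1-p)*(1-q)*ml*\<pi>(0,Suc (Suc b))) = (\<lambda>b. \<pi>(0,Suc b))"
    by (rule ext, rule bal_0S[OF stat, symmetric])
  note s2 = s1[unfolded fe]
  have e1: "nu 0 - \<pi>(0,0) = ((p*q*mh+(1-p)*q*(1-ml))*nu 0 + (1-p)*q*mh*nu 1 + (1-p)*(1-q)*mh*(nu 1 - \<pi>(1,0))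
     + ((1-p)*(1-q)*(1-ml)+p*(1-q)*mh+(1-p)*q*ml)*(nu 0 - \<pi>(0,0))
     + (1-p)*(1-q)*ml*(nu 0 - \<pi>(0,0) - \<pi>(0,1)))"
    using sums_unique2[OF colS1[of 0] s2] .
  show ?thesis using e1 bal_00[OF stat] by algebra
qed

lemma nu_recS: "(p*(1-mh) + (1-p)*mh)*nu (Suc a) = p*(1-mh)*nu a + (1-p)*mh*nu (Suc (Suc a))"
proof -
  have s1: "(\<lambda>b. p*(1-q)*(1-mh)*\<pi>(a,Suc b) + p*q*(1-mh)*\<pi>(a,b) + (p*q*mh+(1-p)*q*(1-mh))*\<pi>(Suc a,b)
     + (1-p)*q*mh*\<pi>(Suc(Suc a),b) + (1-p)*(1-q)*mh*\<pi>(Suc(Suc a),Suc b)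
     + ((1-p)*(1-q)*(1-mh)+p*(1-q)*mh)*\<pi>(Suc a,Suc b)) sums
     (p*(1-q)*(1-mh)*(nu a - \<pi>(a,0)) + p*q*(1-mh)*nu a + (p*q*mh+(1-p)*q*(1-mh))*nu (Suc a)
     + (1-p)*q*mh*nu (Suc(Suc a)) + (1-p)*(1-q)*mh*(nu (Suc(Suc a)) - \<pi>(Suc(Suc a),0))
     + ((1-p)*(1-q)*(1-mh)+p*(1-q)*mh)*(nu (Suc a) - \<pi>(Suc a,0)))"
    by (intro sums_add sums_mult colS colS1)
  have fe: "(\<lambda>b. p*(1-q)*(1-mh)*\<pi>(a,Suc b) + p*q*(1-mh)*\<pi>(a,b) + (p*q*mh+(1-p)*q*(1-mh))*\<pi>(Suc a,b)
     + (1-p)*q*mh*\<pi>(Suc(Suc a),b) + (1-p)*(1-q)*mh*\<pi>(Suc(Suc a),Suc b)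
     + ((1-p)*(1-q)*(1-mh)+p*(1-q)*mh)*\<pi>(Suc a,Suc b)) = (\<lambda>b. \<pi>(Suc a,Suc b))"
    by (rule ext, rule bal_SS[OF stat, symmetric])
  note s2 = s1[unfolded fe]
  have e1: "nu (Suc a) - \<pi>(Suc a,0) = (p*(1-q)*(1-mh)*(nu a - \<pi>(a,0)) + p*q*(1-mh)*nu a + (p*q*mh+(1-p)*q*(1-mh))*nu (Suc a)
     + (1-p)*q*mh*nu (Suc(Suc a)) + (1-p)*(1-q)*mh*(nu (Suc(Suc a)) - \<pi>(Suc(Suc a),0))
     + ((1-p)*(1-q)*(1-mh)+p*(1-q)*mh)*(nu (Suc a) - \<pi>(Suc a,0)))"
    using sums_unique2[OF colS1[of "Suc a"] s2] .
  show ?thesis using e1 bal_S0[OF stat, of a] by algebra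
qed


lemma nu_rec: "p*(1-mh)*nu n = (1-p)*mh*nu (Suc n)"
proof (induction n)
  case 0 then show ?case using nu_rec0 by simp
next
  case (Suc n) then show ?case using nu_recS[of n] by algebra
qed

lemma p_lt_mh: "p < mh"
proof -
  have "q/ml > 0" using q0 ml0 by simp
  then have "p/mh < 1" using rho by linarith
  then show ?thesis using mh0 by (simp add: divide_less_eq)
qed

definition "rr = p*(1-mh)/((1-p)*mh)"

lemma rr_props: "0 \<le> rr" "rr < 1"
proof -
  show "0 \<le> rr" unfolding rr_def using p0 p1 mh0 mh1 by simp
  have "p*(1-mh) < (1-p)*mh" using p_lt_mh by (simp add: algebra_simps)
  then show "rr < 1" unfolding rr_def using p1 mh0 by (subst divide_less_eq_1_pos) auto
qed

lemma nu_geom: "nu n = nu 0 * rr^n"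
proof (induction n)
  case 0 then show ?case by simp
next
  case (Suc n)
  have qm: "(1-p)*mh \<noteq> 0" using p1 mh0 by simp
  have "nu (Suc n) = rr * nu n" unfolding rr_def using nu_rec[of n] qm by (simp add: field_simps)
  then show ?case using Suc by simp
qed

lemma nu0: "nu 0 = 1 - rr"
proof -
  have "(\<lambda>n. nu 0 * rr^n) sums (nu 0 * (1 / (1 - rr)))"
    by (intro sums_mult geometric_sums) (use rr_props in simp)
  moreover have "(\<lambda>n. nu 0 * rr^n) = nu"
  proof
    fix n show "nu 0 * rr^n = nu n" by (rule nu_geom[symmetric])
  qed
  ultimately have "nu sums (nu 0 * (1 / (1 - rr)))" by simp
  from sums_unique2[OF nu_sums this] have "1 = nu 0 / (1 - rr)" by simp
  then show ?thesis using rr_props by (simp add: field_simps)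
qed

lemma ww_sums_real: "(\<lambda>i. of_real (\<pi>(i,j)) * (1::real)^i) sums ww j"
  unfolding ww_def by (simp add: summable_sums[OF row_summable])

definition "DD m = q*ww m - (1-p)*ml*(q*\<pi>(0,m) + (1-q)*\<pi>(0,Suc m))"

lemma DD_step: "DD (Suc b) = DD b"
proof -
  have E: "(aa - (1-cc) + bb) * ww (Suc b) = -(p*q*(1-mh) + (p*q*mh+(1-p)*q*(1-mh)) + (1-p)*q*mh)*ww b
     + \<pi>(0,b)*((1-p)*q*mh + ((p*q*mh+(1-p)*q*(1-mh)) - (p*q*mh+(1-p)*q*(1-ml))))
     + \<pi>(0,Suc b)*(bb + (cc - ((1-p)*(1-q)*(1-ml)+p*(1-q)*mh+(1-p)*q*ml)))
     - (1-p)*(1-q)*ml*\<pi>(0,Suc(Suc b))"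
    using kernel[OF ww_sums_real ww_sums_real, of b] unfolding of_real_eq_id id_apply power_one mult_1_right .
  have id: "DD (Suc b) - DD b = (-(p*q*(1-mh) + (p*q*mh+(1-p)*q*(1-mh)) + (1-p)*q*mh)*ww b
     + \<pi>(0,b)*((1-p)*q*mh + ((p*q*mh+(1-p)*q*(1-mh)) - (p*q*mh+(1-p)*q*(1-ml))))
     + \<pi>(0,Suc b)*(bb + (cc - ((1-p)*(1-q)*(1-ml)+p*(1-q)*mh+(1-p)*q*ml)))
     - (1-p)*(1-q)*ml*\<pi>(0,Suc(Suc b))) - (aa - (1-cc) + bb) * ww (Suc b)"
    unfolding DD_def by algebra
  show ?thesis using id unfolding E[symmetric] by simp
qed

lemma DD_zero: "DD m = 0"
proof -
  have c: "DD m = DD 0" for m by (induction m) (simp_all add: DD_step)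
  have l1: "ww \<longlonglongrightarrow> 0" using summable_LIMSEQ_zero[OF sums_summable[OF ww_sums]] .
  have l2: "(\<lambda>m. \<pi>(0,m)) \<longlonglongrightarrow> 0" using summable_LIMSEQ_zero[OF col_summable] .
  have l3: "(\<lambda>m. \<pi>(0,Suc m)) \<longlonglongrightarrow> 0" using l2 by (rule LIMSEQ_Suc)
  have "DD \<longlonglongrightarrow> q*0 - (1-p)*ml*(q*0 + (1-q)*0)"
    unfolding DD_def[abs_def] by (intro tendsto_intros l1 l2 l3)
  moreover have "DD = (\<lambda>m. DD 0)" by (intro ext c)
  ultimately have "(\<lambda>m. DD 0) \<longlonglongrightarrow> 0" by simp
  then have "DD 0 = 0" using LIMSEQ_const_iff by blast
  then show ?thesis using c by simp
qed

lemma pi00: "\<pi> (0, 0) = (1 - (p / mh + q / ml)) / ((1 - p) * (1 - q))"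
proof -
  have "DD sums (q*1 - (1-p)*ml*(q*nu 0 + (1-q)*(nu 0 - \<pi>(0,0))))"
    unfolding DD_def[abs_def] by (intro sums_diff sums_mult sums_add ww_sums colS colS1)
  moreover have "DD sums 0"
  proof -
    have "DD = (\<lambda>m. 0)" by (intro ext DD_zero)
    then show ?thesis by simp
  qed
  ultimately have e: "q*1 - (1-p)*ml*(q*nu 0 + (1-q)*(nu 0 - \<pi>(0,0))) = 0" using sums_unique2 by blast
  have nz: "1 - p \<noteq> 0" "1 - q \<noteq> 0" "mh \<noteq> 0" "ml \<noteq> 0" using p1 q1 mh0 ml0 by auto
  have n0: "(1-p)*ml*nu 0 = ml*(mh - p)/mh"
  proof -
    have "(1-p)*ml*nu 0 = (1-p)*ml - ml*(p*(1-mh)/mh)" unfolding nu0 rr_def using nz by (simp add: field_simps)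
    also have "\<dots> = ml*(mh - p)/mh" using nz by (simp add: field_simps)
    finally show ?thesis .
  qed
  have e2: "(1-p)*(1-q)*ml*\<pi>(0,0) = (1-p)*ml*nu 0 - q" using e by (simp add: algebra_simps)
  have t: "ml*(mh-p)/mh - q = ml*(1 - (p/mh + q/ml))" using nz by (simp add: field_simps)
  have "ml*((1-p)*(1-q)*\<pi>(0,0)) = ml*(1 - (p/mh + q/ml))" using e2 n0 t by (simp add: mult_ac)
  then have "(1-p)*(1-q)*\<pi>(0,0) = 1 - (p/mh + q/ml)" using nz by simp
  then show ?thesis using nz by (simp add: eq_divide_eq mult_ac)
qed

end

theorem lemma3p2:
  fixes p q mh ml :: real and \<pi> :: "nat \<times> nat \<Rightarrow> real"
  assumes "0 < p" "p < 1" "0 < q" "q < 1" "0 < mh" "mh < 1" "0 < ml" "ml < 1"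
    and "p + q + mh + ml = 1"
    and "p / mh + q / ml < 1"
    and "is_stationary (prio_trans p q mh ml) \<pi>"
  shows
    "(\<forall>x::complex. cmod x \<le> 1 \<longrightarrow>
        gen_phi \<pi> 0 x = \<pi> (0, 0) / (1 - (1 / prio_x1 p q mh 0) * x))
     \<and> (\<forall>j::nat. j \<ge> 1 \<longrightarrow> (\<forall>x::complex. cmod x \<le> 1 \<and> x \<noteq> prio_x0 p q mh 0 \<longrightarrow>
        (let x0 = complex_of_real (prio_x0 p q mh 0);
             x1 = complex_of_real (prio_x1 p q mh 0);
             a = ((((1 - p) * (1 - q) * (ml - mh) - (1 - p) * q * ml) * \<pi> (0, j)
                   - (1 - p) * (1 - q) * ml * \<pi> (0, j + 1)
                   + (1 - p) * q * (ml - mh) * \<pi> (0, j - 1))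
                  - q * ((1 - p) * (1 - mh) + p * mh) * gen_phi \<pi> (j - 1) x0)
                 / (p * (1 - q) * (1 - mh))
         in gen_phi \<pi> j x =
              a / (x - x1)
              - q * gen_phi \<pi> (j - 1) x0 * (x + x0) / ((1 - q) * (x - x1))
              - q * (p * x + (1 - p)) * ((1 - mh) * x + mh) / (p * (1 - q) * (1 - mh) * (x - x1))
                * ((gen_phi \<pi> (j - 1) x - gen_phi \<pi> (j - 1) x0) / (x - x0)))))
     \<and> \<pi> (0, 0) = (1 - (p / mh + q / ml)) / ((1 - p) * (1 - q))"
proof -
  interpret prioq p q mh ml \<pi> using assms by unfold_locales auto
  show ?thesis
  proof (intro conjI allI impI)
    fix x :: complex assume "cmod x \<le> 1"
    then show "gen_phi \<pi> 0 x = \<pi> (0, 0) / (1 - (1 / prio_x1 p q mh 0) * x)" by (rule phi0)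
  next
    fix j :: nat and x :: complex
    assume j: "j \<ge> 1" and x: "cmod x \<le> 1 \<and> x \<noteq> prio_x0 p q mh 0"
    obtain b where b: "j = Suc b" using j by (cases j) auto
    note R = rowj[of x b, OF conjunct1[OF x] conjunct2[OF x]]
    show "let x0 = complex_of_real (prio_x0 p q mh 0);
             x1 = complex_of_real (prio_x1 p q mh 0);
             a = ((((1 - p) * (1 - q) * (ml - mh) - (1 - p) * q * ml) * \<pi> (0, j)
                   - (1 - p) * (1 - q) * ml * \<pi> (0, j + 1)
                   + (1 - p) * q * (ml - mh) * \<pi> (0, j - 1))
                  - q * ((1 - p) * (1 - mh) + p * mh) * gen_phi \<pi> (j - 1) x0)
                 / (p * (1 - q) * (1 - mh))
         in gen_phi \<pi> j x =
              a / (x - x1)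
              - q * gen_phi \<pi> (j - 1) x0 * (x + x0) / ((1 - q) * (x - x1))
              - q * (p * x + (1 - p)) * ((1 - mh) * x + mh) / (p * (1 - q) * (1 - mh) * (x - x1))
                * ((gen_phi \<pi> (j - 1) x - gen_phi \<pi> (j - 1) x0) / (x - x0))"
      unfolding Let_def b using R by simp
  next
    show "\<pi> (0, 0) = (1 - (p / mh + q / ml)) / ((1 - p) * (1 - q))" by (rule pi00)
  qed
qed

end
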